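(* For every graph $G$ and every edge $e\in E(G)$, $$\mathrm{adim}(G)-1\le\mathrm{adim}(G-e)\le\mathrm{adim}(G)+1.$$
   Context: In a graph $H$, let $d_{H,1}(a,b)$ be $0$ if $a=b$, $1$ if $ab\in E(H)$, and $2$ otherwise. A set $A\subseteq V(H)$ is an adjacency resolving set of $H$ if for all distinct $a,b\in V(H)$ there is $z\in A$ with $d_{H,1}(a,z)\ne d_{H,1}(b,z)$. $\mathrm{adim}(H)$ is the minimum size of an adjacency resolving set of $H$. $G-e$ denotes $G$ with the edge $e$ deleted. *)

theory Defs
  imports Main
begin

definition simple_graph :: "'a set \<Rightarrow> 'a set set \<Rightarrow> bool" where
  "simple_graph V E \<longleftrightarrow> finite V \<and> (\<forall>e\<in>E. e \<subseteq> V \<and> card e = 2)"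

definition adj_dist :: "'a set set \<Rightarrow> 'a \<Rightarrow> 'a \<Rightarrow> nat" where
  "adj_dist E a b = (if a = b then 0 else if {a, b} \<in> E then 1 else 2)"

definition adj_resolving :: "'a set \<Rightarrow> 'a set set \<Rightarrow> 'a set \<Rightarrow> bool" where
  "adj_resolving V E A \<longleftrightarrow> A \<subseteq> V \<and>
     (\<forall>a\<in>V. \<forall>b\<in>V. a \<noteq> b \<longrightarrow> (\<exists>z\<in>A. adj_dist E a z \<noteq> adj_dist E b z))"

definition adim :: "'a set \<Rightarrow> 'a set set \<Rightarrow> nat" where
  "adim V E = Min {card A | A. adj_resolving V E A}"

end

theory Submission
  imports Defs
begin

lemma adim_le:
  assumes "finite V" "adj_resolving V E A"
  shows "adim V E \<le> card A"
proof -
  have "{card A | A. adj_resolving V E A} \<subseteq> card ` Pow V"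
    using assms(2) by (auto simp: adj_resolving_def)
  hence "finite {card A | A. adj_resolving V E A}"
    using assms(1) by (meson finite_Pow_iff finite_imageI finite_subset)
  thus ?thesis unfolding adim_def using assms(2) by (intro Min_le) auto
qed

lemma V_resolving: "adj_resolving V E V"
  unfolding adj_resolving_def
proof (intro conjI ballI impI)
  fix a b assume "a \<in> V" "b \<in> V" "a \<noteq> b"
  thus "\<exists>z\<in>V. adj_dist E a z \<noteq> adj_dist E b z"
    by (intro bexI[of _ a]) (auto simp: adj_dist_def)
qed simp

lemma adim_attained:
  assumes "finite V"
  shows "\<exists>A. adj_resolving V E A \<and> adim V E = card A"
proof -
  have "{card A | A. adj_resolving V E A} \<subseteq> card ` Pow V"
    by (auto simp: adj_resolving_def)
  hence f: "finite {card A | A. adj_resolving V E A}"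
    using assms(1) by (meson finite_Pow_iff finite_imageI finite_subset)
  have "{card A | A. adj_resolving V E A} \<noteq> {}" using V_resolving by blast
  from Min_in[OF f this] show ?thesis unfolding adim_def by auto
qed

lemma dist_same:
  assumes "E1 - {e} = E2 - {e}" "x \<notin> e \<or> z \<notin> e"
  shows "adj_dist E1 x z = adj_dist E2 x z"
proof -
  have "{x, z} \<noteq> e" using assms(2) by auto
  hence "({x,z} \<in> E1) = ({x,z} \<in> E2)" using assms(1) by blast
  thus ?thesis unfolding adj_dist_def by simp
qed

lemma transfer:
  assumes fin: "finite V" and res: "adj_resolving V E1 A" and eV: "e \<subseteq> V"
    and ce: "card e = 2" and EE: "E1 - {e} = E2 - {e}"
  shows "adim V E2 \<le> card A + 1"
proof -
  define A' where "A' = (if A \<inter> e = {} then A else A \<union> e)"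
  have AV: "A \<subseteq> V" using res by (simp add: adj_resolving_def)
  have fA: "finite A" using AV fin finite_subset by blast
  have fe: "finite e" using ce by (metis card.infinite zero_neq_numeral)
  have cardA': "card A' \<le> card A + 1"
  proof (cases "A \<inter> e = {}")
    case True thus ?thesis by (simp add: A'_def)
  next
    case False
    have "card (e - A) = card e - card (e \<inter> A)"
      using fe by (simp add: card_Diff_subset_Int)
    moreover have "card (e \<inter> A) \<ge> 1" using False fe
      by (simp add: Suc_leI card_gt_0_iff inf_commute)
    ultimately have "card (e - A) \<le> 1" using ce by linarith
    moreover have "A \<union> e = A \<union> (e - A)" by blast
    moreover have "card (A \<union> (e - A)) = card A + card (e - A)"
      using fA fe by (intro card_Un_disjoint) auto
    ultimately show ?thesis using False by (simp add: A'_def)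
  qed
  have "adj_resolving V E2 A'"
    unfolding adj_resolving_def
  proof (intro conjI ballI impI)
    show "A' \<subseteq> V" using AV eV by (auto simp: A'_def)
  next
    fix a b assume a: "a \<in> V" and b: "b \<in> V" and ab: "a \<noteq> b"
    obtain z where z: "z \<in> A" "adj_dist E1 a z \<noteq> adj_dist E1 b z"
      using res a b ab unfolding adj_resolving_def by blast
    show "\<exists>z\<in>A'. adj_dist E2 a z \<noteq> adj_dist E2 b z"
    proof (cases "z \<in> e")
      case False
      hence "adj_dist E2 a z \<noteq> adj_dist E2 b z"
        using z dist_same[OF EE, of a z] dist_same[OF EE, of b z] by simp
      moreover have "z \<in> A'" using z by (auto simp: A'_def)
      ultimately show ?thesis by blast
    next
      case True
      hence sub: "e \<subseteq> A'" using z by (auto simp: A'_def)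
      show ?thesis
      proof (cases "a \<in> e")
        case True
        hence "a \<in> A'" using sub by blast
        moreover have "adj_dist E2 a a \<noteq> adj_dist E2 b a"
          using ab by (simp add: adj_dist_def)
        ultimately show ?thesis by blast
      next
        case na: False
        show ?thesis
        proof (cases "b \<in> e")
          case True
          hence "b \<in> A'" using sub by blast
          moreover have "adj_dist E2 a b \<noteq> adj_dist E2 b b"
            using ab by (simp add: adj_dist_def)
          ultimately show ?thesis by blast
        next
          case False
          hence "adj_dist E2 a z \<noteq> adj_dist E2 b z"
            using z na dist_same[OF EE, of a z] dist_same[OF EE, of b z] by simp
          moreover have "z \<in> A'" using z by (auto simp: A'_def)
          ultimately show ?thesis by blast
        qed
      qed
    qed
  qed
  hence "adim V E2 \<le> card A'" using adim_le fin by blast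
  thus ?thesis using cardA' by linarith
qed

theorem theorem6p6:
  fixes V :: "'a set" and E :: "'a set set" and e :: "'a set"
  assumes "simple_graph V E" and "e \<in> E"
  shows "int (adim V E) - 1 \<le> int (adim V (E - {e})) \<and>
         adim V (E - {e}) \<le> adim V E + 1"
proof -
  have fin: "finite V" and eV: "e \<subseteq> V" and ce: "card e = 2"
    using assms unfolding simple_graph_def by auto
  obtain A where A: "adj_resolving V E A" "adim V E = card A"
    using adim_attained fin by blast
  obtain B where B: "adj_resolving V (E - {e}) B" "adim V (E - {e}) = card B"
    using adim_attained fin by blast
  have 1: "adim V (E - {e}) \<le> adim V E + 1"
    using transfer[OF fin A(1) eV ce, of "E - {e}"] A(2) by auto
  have "adim V E \<le> adim V (E - {e}) + 1"
    using transfer[OF fin B(1) eV ce, of E] B(2) by auto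
  with 1 show ?thesis by linarith
qed

end
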